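(* Let $\phi\in(0,1)$ and $\gamma_1\in[1,2)$ with $\gamma_1\phi\ne1$. For $\gamma_2\in\mathbb{R}$ let $z_1(\gamma_2),z_2(\gamma_2)$ be the two roots of $z^2-(2-\gamma_1-\gamma_2+\gamma_1\gamma_2\phi)z+(\gamma_1-1)(\gamma_2-1)=0$, let $\Delta(\gamma_2):=(2-\gamma_1-\gamma_2+\gamma_1\gamma_2\phi)^2-4(\gamma_1-1)(\gamma_2-1)$, let $\xi_1,\xi_2$ be the roots of $\Delta(\gamma_2)=0$ with $|\xi_1|\le|\xi_2|$, and $f(\gamma_2):=\max\{|z_1(\gamma_2)|,|z_2(\gamma_2)|\}$. Then $1\le\xi_1$, and: (a) if $\gamma_1\in[1,\frac{2}{1+\sqrt{1-\phi}}]$, then $f$ is non-increasing on $[1,\gamma_1]$; (b) if $\gamma_1\in[\frac{2}{1+\sqrt{1-\phi}},2)$, then $\xi_1\le\gamma_1$, $f$ is non-increasing on $[1,\xi_1]$, and $f(\gamma_2)=\sqrt{(\gamma_1-1)(\gamma_2-1)}$ for all $\gamma_2\in[\xi_1,\gamma_1]$. *)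

theory Defs
  imports Complex_Main
begin

definition qb :: "real \<Rightarrow> real \<Rightarrow> real \<Rightarrow> real" where
  "qb \<phi> g1 g2 = 2 - g1 - g2 + g1 * g2 * \<phi>"

definition qc :: "real \<Rightarrow> real \<Rightarrow> real" where
  "qc g1 g2 = (g1 - 1) * (g2 - 1)"

definition zroots :: "real \<Rightarrow> real \<Rightarrow> real \<Rightarrow> complex set" where
  "zroots \<phi> g1 g2 = {z::complex. z^2 - of_real (qb \<phi> g1 g2) * z + of_real (qc g1 g2) = 0}"

definition fmod :: "real \<Rightarrow> real \<Rightarrow> real \<Rightarrow> real" where
  "fmod \<phi> g1 g2 = Max (norm ` zroots \<phi> g1 g2)"

definition Delta :: "real \<Rightarrow> real \<Rightarrow> real \<Rightarrow> real" where
  "Delta \<phi> g1 g2 = (qb \<phi> g1 g2)^2 - 4 * qc g1 g2"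

end

theory Submission
  imports Defs
begin

lemma quad_set:
  fixes r1 r2 B C :: complex
  assumes "r1 + r2 = B" "r1*r2 = C"
  shows "{z. z^2 - B*z + C = 0} = {r1, r2}"
proof -
  have "\<And>z. z^2 - B*z + C = (z - r1)*(z - r2)"
    unfolding assms[symmetric] by (simp add: algebra_simps power2_eq_square)
  then show ?thesis by auto
qed

lemma max_abs: "(s::real) \<ge> 0 \<Longrightarrow> max \<bar>b+s\<bar> \<bar>b-s\<bar> = \<bar>b\<bar> + s"
  by (auto simp: max_def abs_if)

lemma fmod_real:
  assumes "Delta p a x \<ge> 0"
  shows "fmod p a x = (\<bar>qb p a x\<bar> + sqrt (Delta p a x)) / 2"
proof -
  define b where "b = qb p a x"
  define c where "c = qc a x"
  define s where "s = sqrt (Delta p a x)"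
  have "s^2 = Delta p a x" unfolding s_def by (rule real_sqrt_pow2[OF assms])
  then have s2: "s^2 = b^2 - 4*c" by (simp add: b_def c_def Delta_def)
  have s0: "s \<ge> 0" using assms by (simp add: s_def)
  have "zroots p a x = {of_real ((b+s)/2), of_real ((b-s)/2)}"
    unfolding zroots_def b_def[symmetric] c_def[symmetric]
  proof (rule quad_set)
    show "complex_of_real ((b + s) / 2) + complex_of_real ((b - s) / 2) = complex_of_real b"
    proof -
      have "(b + s) / 2 + (b - s) / 2 = b" by (simp add: field_simps)
      then show ?thesis by (metis of_real_add)
    qed
    have "((b + s) / 2) * ((b - s) / 2) = c" using s2 by (simp add: algebra_simps power2_eq_square)
    then show "complex_of_real ((b + s) / 2) * complex_of_real ((b - s) / 2) = complex_of_real c"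
      by (metis of_real_mult)
  qed
  then have "fmod p a x = max (norm (of_real ((b+s)/2)::complex)) (norm (of_real ((b-s)/2)::complex))" by (simp add: fmod_def del: of_real_add of_real_diff of_real_divide)
  also have "\<dots> = max \<bar>(b+s)/2\<bar> \<bar>(b-s)/2\<bar>" by (simp only: norm_of_real)
  also have "\<dots> = (\<bar>b\<bar> + s)/2" using s0 by (cases "b \<ge> 0") (auto simp: max_def abs_if field_simps)
  finally show ?thesis by (simp add: b_def s_def)
qed

lemma fmod_cplx:
  assumes "Delta p a x \<le> 0"
  shows "fmod p a x = sqrt (qc a x)"
proof -
  define b where "b = qb p a x"
  define c where "c = qc a x"
  define s where "s = sqrt (- Delta p a x)"
  have "s^2 = - Delta p a x" using assms by (simp add: s_def)
  then have s2: "s^2 = 4*c - b^2" by (simp add: b_def c_def Delta_def)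
  have "zroots p a x = {Complex (b/2) (s/2), Complex (b/2) (-s/2)}"
    unfolding zroots_def b_def[symmetric] c_def[symmetric]
  proof (rule quad_set)
    show "Complex (b/2) (s/2) + Complex (b/2) (-s/2) = complex_of_real b"
      by (simp add: complex_eq_iff)
    show "Complex (b/2) (s/2) * Complex (b/2) (-s/2) = complex_of_real c"
      using s2 by (simp add: complex_eq_iff algebra_simps power2_eq_square)
  qed
  then have "fmod p a x = sqrt ((b/2)^2 + (s/2)^2)" by (simp add: fmod_def norm_complex_def)
  also have "(b/2)^2 + (s/2)^2 = c" using s2 by (simp add: power_divide field_simps)
  finally show ?thesis by (simp add: c_def)
qed

lemma dom:
  fixes a p y :: real
  assumes p0: "0<p" and p1: "p<1" and a1: "1<a" and a2: "a<2" and ap: "a*p \<noteq> 1"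
    and y1: "1 \<le> y" and ya: "y \<le> a" and d0: "Delta p a y \<ge> 0"
  shows "\<exists>z. z^2 - qb p a y * z + qc a y = 0 \<and> \<bar>z\<bar> = (\<bar>qb p a y\<bar> + sqrt (Delta p a y))/2
           \<and> a - 1 - (a*p-1)*z \<ge> 0"
proof -
  define b where "b = qb p a y"
  define c where "c = qc a y"
  define s where "s = sqrt (Delta p a y)"
  define m where "m = a*p - 1"
  have "s^2 = Delta p a y" unfolding s_def by (rule real_sqrt_pow2[OF d0])
  then have s2: "s^2 = b^2 - 4*c" by (simp add: b_def c_def Delta_def)
  have s0: "s \<ge> 0" using d0 by (simp add: s_def)
  have hb: "b = 2 - a + m*y" by (simp add: b_def m_def qb_def algebra_simps)
  have hc: "c = (a-1)*(y-1)" by (simp add: c_def qc_def)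
  have m0: "m \<noteq> 0" using ap by (simp add: m_def)
  have m1: "m < a - 1" using p1 a1 by (simp add: m_def)
  have mp: "m + 1 > 0" using p0 a1 by (simp add: m_def)
  have bm: "b*m < 2*(a-1)"
  proof -
    define K where "K = 2 - a + m*a"
    have apa: "a*p < a" using p1 a1 by simp
    show ?thesis
    proof (cases "m < 0")
      case True
      have "m*y \<ge> m*a" using True ya by (simp add: mult_le_cancel_left_neg)
      then have "b \<ge> K" by (simp add: hb K_def algebra_simps)
      then have "b*m \<le> K*m" using True by (simp add: mult_le_cancel_right)
      moreover have "K*m < 2*(a-1)"
      proof (cases "K \<ge> 0")
        case True
        then have "K*m \<le> 0" using \<open>m<0\<close> by (simp add: mult_nonneg_nonpos)
        moreover have "0 < 2*(a-1)" using a1 by simp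
        ultimately show ?thesis by (rule le_less_trans)
      next
        case False
        have "-K < 2*(a-1)" using p0 a1 by (simp add: K_def m_def algebra_simps)
        moreover have "K*(m+1) < 0" using False mp by (simp add: mult_neg_pos)
        then have "(-K)*(-m) < (-K)" by (simp add: algebra_simps)
        ultimately show ?thesis by simp
      qed
      ultimately show ?thesis by simp
    next
      case False
      then have mpos: "m > 0" using m0 by simp
      have "m*y \<le> m*a" using mpos ya by simp
      then have "b \<le> K" by (simp add: hb K_def algebra_simps)
      then have "b*m \<le> K*m" using mpos by (simp add: mult_le_cancel_right)
      moreover have "K*m < 2*(a-1)"
      proof (cases "K \<le> 0")
        case True
        then have "K*m \<le> 0" using mpos by (simp add: mult_nonpos_nonneg)
        moreover have "0 < 2*(a-1)" using a1 by simp
        ultimately show ?thesis by (rule le_less_trans)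
      next
        case False
        have "a*p \<le> 2" using apa a2 by linarith
        then have "a*(a*p) \<le> a*2" using a1 by (intro mult_left_mono) auto
        then have "K \<le> 2" by (simp add: K_def m_def algebra_simps)
        then have "K*m \<le> 2*m" using mpos by simp
        then show ?thesis using m1 by simp
      qed
      ultimately show ?thesis by simp
    qed
  qed
  define z where "z = (if b \<ge> 0 then (b+s)/2 else (b-s)/2)"
  have "2*z - b = s \<or> 2*z - b = -s" by (simp add: z_def field_simps)
  then have zz: "(2*z - b)^2 = s^2" by auto
  have "4*(z^2 - b*z + c) = (2*z - b)^2 - (b^2 - 4*c)" by (simp add: power2_eq_square algebra_simps)
  then have root: "z^2 - b*z + c = 0" using zz s2 by simp
  have absz: "\<bar>z\<bar> = (\<bar>b\<bar> + s)/2"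
  proof (cases "b \<ge> 0")
    case True
    then have "z = (b+s)/2" by (simp add: z_def)
    then show ?thesis using True s0 by simp
  next
    case False
    then have "z = (b-s)/2" by (simp add: z_def)
    then show ?thesis using False s0 by simp
  qed
  define w where "w = (a-1)/m"
  have mw: "m*w = a-1" using m0 by (simp add: w_def)
  have qw: "w^2 - b*w + c = (w-1)*(w+a-1)"
  proof -
    have "w^2 - b*w + c - (w-1)*(w+a-1) = y*(a-1-m*w)"
      unfolding hb hc by (simp add: algebra_simps power2_eq_square)
    then show ?thesis using mw by simp
  qed
  have D: "a - 1 - m*z \<ge> 0"
  proof (cases "m < 0")
    case True
    show ?thesis
    proof (cases "b \<ge> 0")
      case True
      then have "z \<ge> 0" using s0 by (simp add: z_def)
      then have "m*z \<le> 0" using \<open>m<0\<close> by (simp add: mult_nonpos_nonneg)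
      then show ?thesis using a1 by linarith
    next
      case False
      have w0: "w < 0" unfolding w_def using \<open>m<0\<close> a1 by (intro divide_pos_neg) auto
      have "m*(w + a - 1) = m*w + (a-1)*m" by (simp add: algebra_simps)
      also have "\<dots> = (a-1)*(1+m)" unfolding mw by (simp add: algebra_simps)
      finally have "m*(w + a - 1) = (a-1)*(1+m)" .
      moreover have "(a-1)*(1+m) > 0" using a1 mp by simp
      ultimately have "m*(w + a - 1) > 0" by simp
      then have "w + a - 1 < 0" using \<open>m<0\<close> by (simp add: zero_less_mult_iff)
      then have qpos: "w^2 - b*w + c > 0" using qw w0 by (simp add: mult_neg_neg)
      have "m*(2*w) = 2*(m*w)" by simp
      then have "m*b < m*(2*w)" using bm unfolding mw by (simp add: mult.commute)
      then have bw: "b \<ge> 2*w" using \<open>m<0\<close> by (simp add: mult_less_cancel_left_neg)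
      have e: "(b - 2*w)^2 - s^2 = 4*(w^2 - b*w + c)" using s2 by (simp add: power2_eq_square algebra_simps)
      have "4*(w^2 - b*w + c) > 0" using qpos by simp
      then have "(b - 2*w)^2 - s^2 > 0" unfolding e .
      then have sq: "s^2 < (b - 2*w)^2" by (simp only: diff_gt_0_iff_gt)
      have nn: "0 \<le> b - 2*w" using bw by simp
      have "s < b - 2*w" by (rule power_less_imp_less_base[OF sq nn])
      moreover have "z = (b-s)/2" using False by (simp add: z_def)
      ultimately have "z > w" by simp
      have "(-m)*(z - w) = m*w - m*z" by (simp add: algebra_simps)
      then have "a - 1 - m*z = (-m)*(z - w)" unfolding mw by simp
      moreover have "(-m)*(z - w) \<ge> 0" using \<open>z > w\<close> \<open>m<0\<close> by (intro mult_nonneg_nonneg) auto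
      ultimately show ?thesis by simp
    qed
  next
    case False
    then have mpos: "m > 0" using m0 by simp
    show ?thesis
    proof (cases "b \<ge> 0")
      case True
      have w0: "w > 0" using mpos a1 by (simp add: w_def)
      have "m*(w - 1) = m*w - m" by (simp add: algebra_simps)
      then have "m*(w - 1) = a - 1 - m" unfolding mw by simp
      then have "m*(w-1) > 0" using m1 by simp
      then have w1: "w - 1 > 0" using mpos by (simp add: zero_less_mult_iff)
      have "w + a - 1 > 0" using w0 a1 by simp
      then have qpos: "w^2 - b*w + c > 0" using qw w1 by simp
      have "m*(2*w) = 2*(m*w)" by simp
      then have "m*b < m*(2*w)" using bm unfolding mw by (simp add: mult.commute)
      then have bw: "b \<le> 2*w" using mpos by simp
      have e: "(2*w - b)^2 - s^2 = 4*(w^2 - b*w + c)" using s2 by (simp add: power2_eq_square algebra_simps)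
      have "4*(w^2 - b*w + c) > 0" using qpos by simp
      then have "(2*w - b)^2 - s^2 > 0" unfolding e .
      then have sq: "s^2 < (2*w - b)^2" by (simp only: diff_gt_0_iff_gt)
      have nn: "0 \<le> 2*w - b" using bw by simp
      have "s < 2*w - b" by (rule power_less_imp_less_base[OF sq nn])
      moreover have "z = (b+s)/2" using True by (simp add: z_def)
      ultimately have "z < w" by simp
      have "m*(w - z) = m*w - m*z" by (simp add: algebra_simps)
      then have "a - 1 - m*z = m*(w - z)" unfolding mw by simp
      then show ?thesis using \<open>z < w\<close> mpos by simp
    next
      case False
      then have "z \<le> 0" using s0 by (simp add: z_def)
      then have "m*z \<le> 0" using mpos by (simp add: mult_nonneg_nonpos)
      then show ?thesis using a1 by simp
    qed
  qed
  show ?thesis using root absz D by (auto simp: b_def c_def s_def m_def)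
qed

lemma mono:
  fixes a p x y :: real
  assumes p0: "0<p" and p1: "p<1" and a1: "1<a" and a2: "a<2" and ap: "a*p \<noteq> 1"
    and x1: "1 \<le> x" and xy: "x \<le> y" and ya: "y \<le> a" and d0: "Delta p a y \<ge> 0"
  shows "fmod p a y \<le> fmod p a x"
proof -
  obtain z where root: "z^2 - qb p a y * z + qc a y = 0"
    and absz: "\<bar>z\<bar> = (\<bar>qb p a y\<bar> + sqrt (Delta p a y))/2"
    and D: "a - 1 - (a*p-1)*z \<ge> 0"
    using dom[OF p0 p1 a1 a2 ap _ ya d0] x1 xy by auto
  have fy: "fmod p a y = \<bar>z\<bar>" using fmod_real[OF d0] absz by simp
  define b where "b = qb p a x"
  define c where "c = qc a x"
  have "z^2 - b*z + c = (z^2 - qb p a y * z + qc a y) + (x-y)*(a - 1 - (a*p-1)*z)"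
    by (simp add: b_def c_def qb_def qc_def algebra_simps)
  also have "\<dots> \<le> 0" using root D xy by (simp add: mult_nonpos_nonneg)
  finally have q: "z^2 - b*z + c \<le> 0" .
  have dx: "Delta p a x = b^2 - 4*c" by (simp add: b_def c_def Delta_def)
  have sq: "(2*z - b)^2 \<le> Delta p a x" using q dx by (simp add: power2_eq_square algebra_simps)
  have "(2*z - b)^2 \<ge> 0" by simp
  then have dx0: "Delta p a x \<ge> 0" using sq by linarith
  have "sqrt ((2*z - b)^2) \<le> sqrt (Delta p a x)" using sq by (rule real_sqrt_le_mono)
  then have "\<bar>2*z - b\<bar> \<le> sqrt (Delta p a x)" by simp
  moreover have "\<bar>2*z\<bar> \<le> \<bar>2*z - b\<bar> + \<bar>b\<bar>" using abs_triangle_ineq[of "2*z - b" b] by simp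
  ultimately have "\<bar>z\<bar> \<le> (\<bar>b\<bar> + sqrt (Delta p a x))/2" by simp
  then show ?thesis using fy fmod_real[OF dx0] by (simp add: b_def)
qed

theorem mainTheorem18:
  fixes \<phi> g1 \<xi>1 \<xi>2 :: real
  assumes "0 < \<phi>" "\<phi> < 1" "1 \<le> g1" "g1 < 2" "g1 * \<phi> \<noteq> 1"
    and roots: "\<forall>x. Delta \<phi> g1 x = (1 - g1 * \<phi>)^2 * (x - \<xi>1) * (x - \<xi>2)"
    and ord: "\<bar>\<xi>1\<bar> \<le> \<bar>\<xi>2\<bar>"
  shows "1 \<le> \<xi>1
    \<and> (g1 \<le> 2 / (1 + sqrt (1 - \<phi>)) \<longrightarrow>
         (\<forall>x y. 1 \<le> x \<and> x \<le> y \<and> y \<le> g1 \<longrightarrow> fmod \<phi> g1 y \<le> fmod \<phi> g1 x))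
    \<and> (2 / (1 + sqrt (1 - \<phi>)) \<le> g1 \<longrightarrow>
         \<xi>1 \<le> g1
         \<and> (\<forall>x y. 1 \<le> x \<and> x \<le> y \<and> y \<le> \<xi>1 \<longrightarrow> fmod \<phi> g1 y \<le> fmod \<phi> g1 x)
         \<and> (\<forall>x. \<xi>1 \<le> x \<and> x \<le> g1 \<longrightarrow> fmod \<phi> g1 x = sqrt ((g1 - 1) * (x - 1))))"
proof -
  note p0 = assms(1) and p1 = assms(2) and a1 = assms(3) and a2 = assms(4) and ap = assms(5)
  define M where "M = (1 - g1 * \<phi>)^2"
  have M0: "M > 0" using ap by (simp add: M_def)
  have R: "\<And>x. Delta \<phi> g1 x = M * ((x - \<xi>1) * (x - \<xi>2))" using roots by (simp add: M_def mult.assoc)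
  have D0: "Delta \<phi> g1 0 = g1^2" by (simp add: Delta_def qb_def qc_def power2_eq_square algebra_simps)
  have D1: "Delta \<phi> g1 1 = (1 - g1 + g1*\<phi>)^2" by (simp add: Delta_def qb_def qc_def power2_eq_square algebra_simps)
  have Da: "Delta \<phi> g1 g1 = g1^2*\<phi>*(4 - 4*g1 + g1^2*\<phi>)" by (simp add: Delta_def qb_def qc_def power2_eq_square algebra_simps)
  have P: "M * (\<xi>1*\<xi>2) = g1^2" using R[of 0] D0 by simp
  have S1: "M * ((1-\<xi>1)*(1-\<xi>2)) = (1 - g1 + g1*\<phi>)^2" using R[of 1] D1 by simp
  have MS: "M * (\<xi>1+\<xi>2) = M + g1^2 - (1 - g1 + g1*\<phi>)^2"
    using P S1 by (simp add: algebra_simps)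
  have E1: "M + g1^2 - (1 - g1 + g1*\<phi>)^2 - 2*M = 2*(g1-1) + 2*g1^2*\<phi>*(1-\<phi>)"
    by (simp add: M_def power2_eq_square algebra_simps)
  have "2*g1^2*\<phi>*(1-\<phi>) \<ge> 0" using p0 p1 by simp
  then have "M * (\<xi>1+\<xi>2) - M * 2 \<ge> 0" using MS E1 a1 by simp
  then have "M * (\<xi>1+\<xi>2) \<ge> M * 2" by linarith
  then have S2: "\<xi>1 + \<xi>2 \<ge> 2" using M0 by simp
  have E2: "M + g1^2 - (1 - g1 + g1*\<phi>)^2 - 2*g1*M = 2*g1*\<phi>*(3*g1 - 2 - g1^2*\<phi>)"
    by (simp add: M_def power2_eq_square algebra_simps)
  have "g1^2*\<phi> \<le> g1^2" using p1 by (simp add: mult_left_le)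
  moreover have "3*g1 - 2 - g1^2 \<ge> 0"
  proof -
    have "(g1-1)*(2-g1) \<ge> 0" using a1 a2 by simp
    then show ?thesis by (simp add: power2_eq_square algebra_simps)
  qed
  ultimately have "3*g1 - 2 - g1^2*\<phi> \<ge> 0" by simp
  then have "2*g1*\<phi>*(3*g1 - 2 - g1^2*\<phi>) \<ge> 0" using p0 a1 by simp
  then have "M * (\<xi>1+\<xi>2) \<ge> M * (2*g1)" using MS E2 by (simp add: algebra_simps)
  then have Sa: "\<xi>1 + \<xi>2 \<ge> 2*g1" using M0 by simp
  have "M * (\<xi>1*\<xi>2) > 0" using P a1 by simp
  then have Ppos: "\<xi>1*\<xi>2 > 0" using M0 by (simp add: zero_less_mult_iff)
  have pos1: "\<xi>1 > 0"
  proof (rule ccontr)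
    assume "\<not> \<xi>1 > 0"
    then have "\<xi>1 < 0" using Ppos by (cases "\<xi>1 = 0") auto
    then have "\<xi>2 < 0" using Ppos by (simp add: zero_less_mult_iff)
    then show False using \<open>\<xi>1 < 0\<close> S2 by simp
  qed
  then have pos2: "\<xi>2 > 0" using Ppos by (simp add: zero_less_mult_iff)
  have le12: "\<xi>1 \<le> \<xi>2" using ord pos1 pos2 by simp
  have "M * ((1-\<xi>1)*(1-\<xi>2)) \<ge> 0" using S1 by simp
  then have S1': "(1-\<xi>1)*(1-\<xi>2) \<ge> 0" using M0 by (simp add: zero_le_mult_iff)
  have one: "1 \<le> \<xi>1"
  proof (rule ccontr)
    assume "\<not> 1 \<le> \<xi>1"
    then have "1 - \<xi>2 \<ge> 0" using S1' by (simp add: zero_le_mult_iff)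
    then show False using \<open>\<not> 1 \<le> \<xi>1\<close> S2 by simp
  qed
  define s where "s = sqrt (1 - \<phi>)"
  have s2: "s^2 = 1 - \<phi>" using p1 by (simp add: s_def)
  have s0: "s > 0" using p1 by (simp add: s_def)
  have s1: "s < 1" using p0 p1 by (simp add: s_def)
  have fac: "4 - 4*g1 + g1^2*\<phi> = (g1*(1+s) - 2)*(g1*(1-s) - 2)"
  proof -
    have e: "(g1*(1+s) - 2)*(g1*(1-s) - 2) = 4 - 4*g1 + g1^2*(1 - s^2)"
      by (simp add: power2_eq_square algebra_simps)
    show ?thesis unfolding e s2 by simp
  qed
  have neg: "g1*(1-s) - 2 < 0"
  proof -
    have "g1*(1-s) \<le> g1" using s0 a1 by (simp add: mult_left_le)
    then show ?thesis using a2 by simp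
  qed
  have iff: "(g1 \<le> 2 / (1 + s)) = (g1*(1+s) \<le> 2)" using s0 by (simp add: le_divide_eq)
  have iff2: "(2 / (1 + s) \<le> g1) = (2 \<le> g1*(1+s))" using s0 by (simp add: divide_le_eq)
  have partA: "g1 \<le> 2 / (1 + s) \<longrightarrow>
         (\<forall>x y. 1 \<le> x \<and> x \<le> y \<and> y \<le> g1 \<longrightarrow> fmod \<phi> g1 y \<le> fmod \<phi> g1 x)"
  proof (intro impI allI)
    fix x y assume h: "g1 \<le> 2 / (1 + s)" and xy: "1 \<le> x \<and> x \<le> y \<and> y \<le> g1"
    have "g1*(1+s) - 2 \<le> 0" using h iff by simp
    then have "4 - 4*g1 + g1^2*\<phi> \<ge> 0" using fac neg by (simp add: mult_nonpos_nonpos)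
    then have "Delta \<phi> g1 g1 \<ge> 0" using Da p0 by simp
    then have "M * ((g1 - \<xi>1) * (g1 - \<xi>2)) \<ge> 0" using R by simp
    then have ga: "(g1 - \<xi>1) * (g1 - \<xi>2) \<ge> 0" using M0 by (simp add: zero_le_mult_iff)
    have gx: "g1 \<le> \<xi>1"
    proof (rule ccontr)
      assume "\<not> g1 \<le> \<xi>1"
      then have "g1 - \<xi>2 \<ge> 0" using ga by (simp add: zero_le_mult_iff)
      then show False using \<open>\<not> g1 \<le> \<xi>1\<close> Sa by simp
    qed
    show "fmod \<phi> g1 y \<le> fmod \<phi> g1 x"
    proof (cases "g1 = 1")
      case True
      then have "x = y" using xy by simp
      then show ?thesis by simp
    next
      case False
      then have a1': "1 < g1" using a1 by simp
      have "(y - \<xi>1) * (y - \<xi>2) \<ge> 0" using xy gx le12 by (simp add: mult_nonpos_nonpos)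
      then have "Delta \<phi> g1 y \<ge> 0" using R M0 by simp
      then show ?thesis using mono[OF p0 p1 a1' a2 ap] xy by simp
    qed
  qed
  have partB: "2 / (1 + s) \<le> g1 \<longrightarrow>
         \<xi>1 \<le> g1
         \<and> (\<forall>x y. 1 \<le> x \<and> x \<le> y \<and> y \<le> \<xi>1 \<longrightarrow> fmod \<phi> g1 y \<le> fmod \<phi> g1 x)
         \<and> (\<forall>x. \<xi>1 \<le> x \<and> x \<le> g1 \<longrightarrow> fmod \<phi> g1 x = sqrt ((g1 - 1) * (x - 1)))"
  proof (intro impI)
    assume h: "2 / (1 + s) \<le> g1"
    have h2: "g1*(1+s) - 2 \<ge> 0" using h iff2 by simp
    have a1': "1 < g1"
    proof (rule ccontr)
      assume "\<not> 1 < g1"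
      then have "g1 = 1" using a1 by simp
      then show False using h2 s1 by simp
    qed
    have "4 - 4*g1 + g1^2*\<phi> \<le> 0" using fac neg h2 by (simp add: mult_nonneg_nonpos)
    then have "Delta \<phi> g1 g1 \<le> 0" using Da p0 by (simp add: mult_nonneg_nonpos)
    then have "M * ((g1 - \<xi>1) * (g1 - \<xi>2)) \<le> 0" using R by simp
    then have ga: "(g1 - \<xi>1) * (g1 - \<xi>2) \<le> 0" using M0 by (simp add: mult_le_0_iff)
    have g1x: "\<xi>1 \<le> g1"
    proof (rule ccontr)
      assume "\<not> \<xi>1 \<le> g1"
      then have "(g1 - \<xi>1) * (g1 - \<xi>2) > 0" using le12 by (simp add: mult_neg_neg)
      then show False using ga by simp
    qed
    have g2x: "g1 \<le> \<xi>2"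
    proof (rule ccontr)
      assume "\<not> g1 \<le> \<xi>2"
      then have "(g1 - \<xi>1) * (g1 - \<xi>2) > 0" using le12 by simp
      then show False using ga by simp
    qed
    have m: "\<forall>x y. 1 \<le> x \<and> x \<le> y \<and> y \<le> \<xi>1 \<longrightarrow> fmod \<phi> g1 y \<le> fmod \<phi> g1 x"
    proof (intro allI impI)
      fix x y assume xy: "1 \<le> x \<and> x \<le> y \<and> y \<le> \<xi>1"
      have "(y - \<xi>1) * (y - \<xi>2) \<ge> 0" using xy le12 by (simp add: mult_nonpos_nonpos)
      then have "Delta \<phi> g1 y \<ge> 0" using R M0 by simp
      then show "fmod \<phi> g1 y \<le> fmod \<phi> g1 x" using mono[OF p0 p1 a1' a2 ap] xy g1x by simp
    qed
    have c: "\<forall>x. \<xi>1 \<le> x \<and> x \<le> g1 \<longrightarrow> fmod \<phi> g1 x = sqrt ((g1 - 1) * (x - 1))"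
    proof (intro allI impI)
      fix x assume x: "\<xi>1 \<le> x \<and> x \<le> g1"
      have "(x - \<xi>1) * (x - \<xi>2) \<le> 0" using x g2x by (simp add: mult_nonneg_nonpos)
      then have "Delta \<phi> g1 x \<le> 0" using R M0 by (simp add: mult_nonneg_nonpos)
      then show "fmod \<phi> g1 x = sqrt ((g1 - 1) * (x - 1))" using fmod_cplx by (simp add: qc_def)
    qed
    show "\<xi>1 \<le> g1 \<and> (\<forall>x y. 1 \<le> x \<and> x \<le> y \<and> y \<le> \<xi>1 \<longrightarrow> fmod \<phi> g1 y \<le> fmod \<phi> g1 x)
         \<and> (\<forall>x. \<xi>1 \<le> x \<and> x \<le> g1 \<longrightarrow> fmod \<phi> g1 x = sqrt ((g1 - 1) * (x - 1)))"
      using g1x m c by blast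
  qed
  show ?thesis using one partA partB by (simp add: s_def)
qed

end
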